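(* Let $X$ be a finite set with $|X|\geq 2$ and put $p=2|X|-1$. Let $(K_i),(t_i),(k_i)$ be sequences of non-negative integers such that $t_i\geq 1$, $K_i=t_i+2k_i$ for all $i$, and $K_i\to\infty$. Suppose the limit \[y=\lim_{i\to\infty}|M(t_i,k_i)|^{1/K_i}\] exists and is finite. (i) If $(k_i)$ is bounded above, then $y\leq p$. (ii) If $k_i\geq1$ for all $i$ and $\bigl((t_i-1)/k_i\bigr)$ is unbounded above, then $y\leq p$. (iii) If $k_i\geq 1$ for all $i$ and $x\in[0,\infty)$ is an accumulation point of the sequence $\bigl((t_i-1)/k_i\bigr)$, then $y=\exp h(x)$, where \[h(x)=\frac{1}{x+2}\Bigl(x\log p+\bigl(p+x(p-1)\bigr)\log\bigl(p+x(p-1)\bigr)-\bigl((p-1)+x(p-1)\bigr)\log\bigl((p-1)+x(p-1)\bigr)\Bigr).\]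
   Context: $\mathrm{FIM}(X)$ is the free inverse monoid on $X$, with elements identified (Munn's model) with pairs $(T,g)$. Here $T$ is a finite connected subgraph, containing $1$, of the Cayley graph of the free group $\mathrm{FG}(X)$ with respect to $X$, and $g$ is a vertex of $T$. The trunk is the geodesic in $T$ from $1$ to $g$. Branch edges are the edges of $T$ not on the trunk. $M(t,k)$ is the set of elements of $\mathrm{FIM}(X)$ with exactly $t$ trunk edges and $k$ branch edges. For $t\ge1$, \[|M(t,k)|=(p+1)p^{t-1}\frac{2p+(t-1)(p-1)}{kp+2p+(t-1)(p-1)}\binom{kp+2p+(t-1)(p-1)}{k}.\] *)

theory Defs
  imports Complex_Main
begin

text \<open>Free group FG(X): elements are reduced words over X \<union> X^{-1}; a letter is a pair
  (x, b) with b = True meaning x and b = False meaning x^{-1}.\<close>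

definition inv_letter :: "'a \<times> bool \<Rightarrow> 'a \<times> bool" where
  "inv_letter l = (fst l, \<not> snd l)"

definition reduced :: "('a \<times> bool) list \<Rightarrow> bool" where
  "reduced w \<longleftrightarrow> (\<forall>i. Suc i < length w \<longrightarrow> w ! Suc i \<noteq> inv_letter (w ! i))"

definition FG_elems :: "'a set \<Rightarrow> ('a \<times> bool) list set" where
  "FG_elems X = {w. set (map fst w) \<subseteq> X \<and> reduced w}"

text \<open>The Cayley graph of FG(X) w.r.t. X is a tree whose edges join w and its reduced
  word with the last letter removed. A finite connected subgraph T containing 1 is
  determined by its vertex set, which is a finite prefix-closed set of reduced words
  containing the empty word; its edges are the edges from each non-identity vertex to
  its parent. Munn's model: FIM(X) = pairs (T, g) with g a vertex of T.\<close>

definition munn_tree :: "'a set \<Rightarrow> ('a \<times> bool) list set \<Rightarrow> bool" where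
  "munn_tree X V \<longleftrightarrow> finite V \<and> [] \<in> V \<and> V \<subseteq> FG_elems X \<and>
     (\<forall>w \<in> V. \<forall>n. take n w \<in> V)"

definition FIM :: "'a set \<Rightarrow> (('a \<times> bool) list set \<times> ('a \<times> bool) list) set" where
  "FIM X = {(V, g). munn_tree X V \<and> g \<in> V}"

text \<open>Number of edges of T = |V| - 1; trunk edges = length of g (geodesic from 1 to g);
  branch edges = the remaining ones.\<close>

definition trunk_edges :: "('a \<times> bool) list set \<times> ('a \<times> bool) list \<Rightarrow> nat" where
  "trunk_edges m = length (snd m)"

definition branch_edges :: "('a \<times> bool) list set \<times> ('a \<times> bool) list \<Rightarrow> nat" where
  "branch_edges m = card (fst m) - 1 - length (snd m)"

definition M :: "'a set \<Rightarrow> nat \<Rightarrow> nat \<Rightarrow> (('a \<times> bool) list set \<times> ('a \<times> bool) list) set" where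
  "M X t k = {m \<in> FIM X. trunk_edges m = t \<and> branch_edges m = k}"

definition hfun :: "real \<Rightarrow> real \<Rightarrow> real" where
  "hfun p x = (1 / (x + 2)) * (x * ln p + (p + x * (p - 1)) * ln (p + x * (p - 1))
      - ((p - 1) + x * (p - 1)) * ln ((p - 1) + x * (p - 1)))"

end

theory Submission
  imports Defs "HOL-Library.Sublist"
begin

lemma reduced_snoc: "reduced (u @ [l]) \<longleftrightarrow> reduced u \<and> (u \<noteq> [] \<longrightarrow> l \<noteq> inv_letter (last u))"
proof
  assume r: "reduced (u @ [l])"
  have "reduced u" unfolding reduced_def
  proof (intro allI impI)
    fix i assume "Suc i < length u"
    with r[unfolded reduced_def, rule_format, of i] show "u ! Suc i \<noteq> inv_letter (u ! i)"
      by (simp add: nth_append)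
  qed
  moreover have "l \<noteq> inv_letter (last u)" if "u \<noteq> []"
  proof -
    from that obtain n where n: "length u = Suc n" by (cases u) auto
    from r[unfolded reduced_def, rule_format, of n] n show ?thesis
      by (simp add: nth_append last_conv_nth that)
  qed
  ultimately show "reduced u \<and> (u \<noteq> [] \<longrightarrow> l \<noteq> inv_letter (last u))" by blast
next
  assume a: "reduced u \<and> (u \<noteq> [] \<longrightarrow> l \<noteq> inv_letter (last u))"
  show "reduced (u @ [l])" unfolding reduced_def
  proof (intro allI impI)
    fix i assume i: "Suc i < length (u @ [l])"
    show "(u @ [l]) ! Suc i \<noteq> inv_letter ((u @ [l]) ! i)"
    proof (cases "Suc i < length u")
      case True
      then show ?thesis using a by (simp add: nth_append reduced_def)
    next
      case False
      then have si: "Suc i = length u" using i by simp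
      then have "u \<noteq> []" "last u = u ! i" by (auto, metis diff_Suc_1 last_conv_nth list.size(3) nat.distinct(1))
      then show ?thesis using a si by (simp add: nth_append)
    qed
  qed
qed


lemma FG_take: "w \<in> FG_elems X \<Longrightarrow> take n w \<in> FG_elems X"
  unfolding FG_elems_def reduced_def by (fastforce dest: in_set_takeD)

lemma FG_prefix: "w \<in> FG_elems X \<Longrightarrow> prefix a w \<Longrightarrow> a \<in> FG_elems X"
  by (metis FG_take append_eq_conv_conj prefix_def)

lemma FG_butlast: "w \<in> FG_elems X \<Longrightarrow> butlast w \<in> FG_elems X"
  by (simp add: FG_prefix prefixeq_butlast)

definition ch :: "'a set \<Rightarrow> ('a \<times> bool) list \<Rightarrow> ('a \<times> bool) list set" where
  "ch X u = {u @ [l] | l. fst l \<in> X \<and> reduced (u @ [l])}"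

lemma FG_snoc: "u @ [l] \<in> FG_elems X \<longleftrightarrow> u \<in> FG_elems X \<and> fst l \<in> X \<and> (u \<noteq> [] \<longrightarrow> l \<noteq> inv_letter (last u))"
  by (auto simp: FG_elems_def reduced_snoc)

lemma ch_alt: "u \<in> FG_elems X \<Longrightarrow> ch X u = {w \<in> FG_elems X. w \<noteq> [] \<and> butlast w = u}"
proof (intro set_eqI iffI)
  fix w assume u: "u \<in> FG_elems X" and "w \<in> ch X u"
  then obtain l where l: "w = u @ [l]" "fst l \<in> X" "reduced (u @ [l])" unfolding ch_def by auto
  then show "w \<in> {w \<in> FG_elems X. w \<noteq> [] \<and> butlast w = u}"
    using u by (auto simp: FG_elems_def)
next
  fix w assume u: "u \<in> FG_elems X" and w: "w \<in> {w \<in> FG_elems X. w \<noteq> [] \<and> butlast w = u}"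
  then have e: "w = u @ [last w]" by auto
  with w have "u @ [last w] \<in> FG_elems X" by auto
  then have "fst (last w) \<in> X" "reduced (u @ [last w])" unfolding FG_elems_def by auto
  then show "w \<in> ch X u" unfolding ch_def using e by blast
qed

lemma ch_sub: "u \<in> FG_elems X \<Longrightarrow> ch X u \<subseteq> FG_elems X"
  using ch_alt by blast

lemma ch_img: "u \<in> FG_elems X \<Longrightarrow> ch X u = (\<lambda>l. u @ [l]) ` ((X \<times> UNIV) - (if u = [] then {} else {inv_letter (last u)}))"
  unfolding ch_def using reduced_snoc[of u] unfolding FG_elems_def by force

lemma card_ch:
  assumes "finite X" "u \<in> FG_elems X"
  shows "finite (ch X u) \<and> card (ch X u) = (if u = [] then 2 * card X else 2 * card X - 1)"
proof -
  have inj: "inj (\<lambda>l. u @ [l])" by (auto intro: injI)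
  have cX: "card (X \<times> (UNIV :: bool set)) = 2 * card X" using assms(1)
    by (simp add: card_cartesian_product)
  have il: "u \<noteq> [] \<Longrightarrow> inv_letter (last u) \<in> X \<times> UNIV"
    using assms(2) last_in_set unfolding FG_elems_def inv_letter_def by fastforce
  show ?thesis
    unfolding ch_img[OF assms(2)]
    using assms(1) cX il
    by (auto simp: card_image inj_on_subset[OF inj] card_Diff_singleton)
qed

definition antichain :: "('a \<times> bool) list set \<Rightarrow> bool" where
  "antichain S \<longleftrightarrow> (\<forall>a\<in>S. \<forall>b\<in>S. prefix a b \<longrightarrow> a = b)"

definition Fr :: "'a set \<Rightarrow> ('a \<times> bool) list set \<Rightarrow> nat \<Rightarrow> ('a \<times> bool) list set set" where
  "Fr X S k = {W. finite W \<and> card W = k \<and> W \<subseteq> FG_elems X \<and>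
      (\<forall>w\<in>W. w \<in> S \<or> (w \<noteq> [] \<and> butlast w \<in> W))}"

fun ff :: "nat \<Rightarrow> nat \<Rightarrow> nat \<Rightarrow> nat" where
  "ff p 0 0 = 1"
| "ff p 0 (Suc k) = 0"
| "ff p (Suc s) 0 = ff p s 0"
| "ff p (Suc s) (Suc k) = ff p s (Suc k) + ff p (s + p) k"

lemma ff_0: "ff p s 0 = 1"
  by (induction s) auto

lemma Fr_prefix:
  assumes "W \<in> Fr X S k" "w \<in> W" shows "\<exists>s\<in>S. prefix s w"
  using assms(2)
proof (induction "length w" arbitrary: w rule: less_induct)
  case less
  show ?case
  proof (cases "w \<in> S")
    case True then show ?thesis by blast
  next
    case False
    with less.prems assms(1) have "w \<noteq> []" "butlast w \<in> W" unfolding Fr_def by auto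
    then obtain s where "s \<in> S" "prefix s (butlast w)"
      using less.hyps[of "butlast w"] by auto
    then show ?thesis using prefixeq_butlast prefix_order.trans by blast
  qed
qed

lemma Fr_mono: "W \<in> Fr X S k \<Longrightarrow> S \<subseteq> S' \<Longrightarrow> W \<in> Fr X S' k"
  unfolding Fr_def by blast

lemma Fr_empty: "Fr X {} (Suc k) = {}"
proof -
  { fix W assume W: "W \<in> Fr X {} (Suc k)"
    then have "W \<noteq> {}" unfolding Fr_def by auto
    then obtain w where "w \<in> W" by blast
    with Fr_prefix[OF W] have False by auto }
  then show ?thesis by blast
qed

lemma Fr_zero: "Fr X S 0 = {{}}"
  unfolding Fr_def by auto

lemma Fr_split:
  assumes ac: "antichain (insert u S')" and u: "u \<notin> S'" "u \<noteq> []" "u \<in> FG_elems X"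
  shows "Fr X (insert u S') (Suc k) = Fr X S' (Suc k) \<union> insert u ` Fr X (S' \<union> ch X u) k"
    and "\<forall>W \<in> Fr X S' (Suc k). u \<notin> W"
    and "\<forall>W \<in> Fr X (S' \<union> ch X u) k. u \<notin> W"
proof -
  show A: "\<forall>W \<in> Fr X S' (Suc k). u \<notin> W"
  proof (intro ballI notI)
    fix W assume W: "W \<in> Fr X S' (Suc k)" "u \<in> W"
    then obtain s where "s \<in> S'" "prefix s u" using Fr_prefix by blast
    with ac u show False unfolding antichain_def by blast
  qed
  show B: "\<forall>W \<in> Fr X (S' \<union> ch X u) k. u \<notin> W"
  proof (intro ballI notI)
    fix W assume W: "W \<in> Fr X (S' \<union> ch X u) k" "u \<in> W"
    then obtain s where s: "s \<in> S' \<union> ch X u" "prefix s u" using Fr_prefix by blast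
    show False
    proof (cases "s \<in> S'")
      case True with ac u s show False unfolding antichain_def by blast
    next
      case False
      then have "length s = Suc (length u)" using s unfolding ch_def by auto
      with prefix_length_le[OF s(2)] show False by simp
    qed
  qed
  show "Fr X (insert u S') (Suc k) = Fr X S' (Suc k) \<union> insert u ` Fr X (S' \<union> ch X u) k"
  proof (intro equalityI subsetI)
    fix W assume W: "W \<in> Fr X (insert u S') (Suc k)"
    show "W \<in> Fr X S' (Suc k) \<union> insert u ` Fr X (S' \<union> ch X u) k"
    proof (cases "u \<in> W")
      case False
      then have "W \<in> Fr X S' (Suc k)" using W unfolding Fr_def by auto
      then show ?thesis by blast
    next
      case True
      have "W - {u} \<in> Fr X (S' \<union> ch X u) k"
        unfolding Fr_def
      proof (intro CollectI conjI ballI)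
        show "finite (W - {u})" using W unfolding Fr_def by auto
        show "card (W - {u}) = k" using W True unfolding Fr_def by auto
        show "W - {u} \<subseteq> FG_elems X" using W unfolding Fr_def by auto
        fix w assume w: "w \<in> W - {u}"
        then have wF: "w \<in> FG_elems X" using W unfolding Fr_def by auto
        from w W have "w \<in> insert u S' \<or> (w \<noteq> [] \<and> butlast w \<in> W)" unfolding Fr_def by auto
        then show "w \<in> S' \<union> ch X u \<or> (w \<noteq> [] \<and> butlast w \<in> W - {u})"
        proof
          assume "w \<in> insert u S'" then show ?thesis using w by auto
        next
          assume h: "w \<noteq> [] \<and> butlast w \<in> W"
          show ?thesis
          proof (cases "butlast w = u")
            case True
            then have "w \<in> ch X u" using ch_alt[OF u(3)] wF h by auto
            then show ?thesis by auto
          next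
            case False then show ?thesis using h by auto
          qed
        qed
      qed
      moreover have "W = insert u (W - {u})" using True by auto
      ultimately show ?thesis by blast
    qed
  next
    fix W assume W: "W \<in> Fr X S' (Suc k) \<union> insert u ` Fr X (S' \<union> ch X u) k"
    show "W \<in> Fr X (insert u S') (Suc k)"
    proof (cases "W \<in> Fr X S' (Suc k)")
      case True then show ?thesis using Fr_mono by blast
    next
      case False
      then obtain W' where W': "W' \<in> Fr X (S' \<union> ch X u) k" "W = insert u W'" using W by blast
      have nu: "u \<notin> W'" using B W' by blast
      show ?thesis
        unfolding Fr_def
      proof (intro CollectI conjI ballI)
        show "finite W" using W' unfolding Fr_def by auto
        show "card W = Suc k" using W' nu unfolding Fr_def by auto
        show "W \<subseteq> FG_elems X" using W' u unfolding Fr_def by auto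
        fix w assume w: "w \<in> W"
        show "w \<in> insert u S' \<or> (w \<noteq> [] \<and> butlast w \<in> W)"
        proof (cases "w = u")
          case True then show ?thesis by simp
        next
          case False
          then have "w \<in> W'" using w W' by simp
          then have "w \<in> S' \<or> w \<in> ch X u \<or> (w \<noteq> [] \<and> butlast w \<in> W')" using W'(1) unfolding Fr_def by auto
          then show ?thesis using W'(2) ch_alt[OF u(3)] by auto
        qed
      qed
    qed
  qed
qed


lemma Fr_count:
  assumes X: "finite X" "card X \<ge> 1"
  shows "finite S \<Longrightarrow> S \<subseteq> FG_elems X \<Longrightarrow> [] \<notin> S \<Longrightarrow> antichain S \<Longrightarrow>
    finite (Fr X S k) \<and> card (Fr X S k) = ff (2 * card X - 1) (card S) k"
proof (induction k arbitrary: S)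
  case 0
  then show ?case by (simp add: Fr_zero ff_0)
next
  case (Suc k)
  note outer = Suc.IH
  show ?case using Suc.prems
  proof (induction S rule: finite_induct)
    case empty
    then show ?case by (simp add: Fr_empty)
  next
    case (insert u S')
    have u: "u \<notin> S'" "u \<noteq> []" "u \<in> FG_elems X" using insert by auto
    have acS': "antichain S'" using insert.prems(3) unfolding antichain_def by blast
    have IS': "finite (Fr X S' (Suc k)) \<and> card (Fr X S' (Suc k)) = ff (2 * card X - 1) (card S') (Suc k)"
      using insert.IH insert.prems acS' by auto
    have chu: "finite (ch X u)" "card (ch X u) = 2 * card X - 1" using card_ch[OF X(1) u(3)] u by auto
    have disj: "S' \<inter> ch X u = {}"
    proof (rule ccontr)
      assume "S' \<inter> ch X u \<noteq> {}"
      then obtain c where c: "c \<in> S'" "c \<in> ch X u" by blast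
      then obtain l where "c = u @ [l]" unfolding ch_def by auto
      then have "prefix u c" by simp
      with c insert.prems(3) u show False unfolding antichain_def by auto
    qed
    have ac2: "antichain (S' \<union> ch X u)"
      unfolding antichain_def
    proof (intro ballI impI)
      fix a b assume a: "a \<in> S' \<union> ch X u" and b: "b \<in> S' \<union> ch X u" and ab: "prefix a b"
      have ac: "\<And>a b. a \<in> insert u S' \<Longrightarrow> b \<in> insert u S' \<Longrightarrow> prefix a b \<Longrightarrow> a = b"
        using insert.prems(3) unfolding antichain_def by blast
      show "a = b"
      proof (cases "a \<in> S'")
        case aS: True
        show ?thesis
        proof (cases "b \<in> S'")
          case True then show ?thesis using ac aS ab by blast
        next
          case False
          then obtain l where bl: "b = u @ [l]" using b unfolding ch_def by auto
          then have "a = u @ [l] \<or> prefix a u" using ab by (simp add: prefix_snoc)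
          then show ?thesis
          proof
            assume "a = u @ [l]" then show ?thesis using bl by simp
          next
            assume "prefix a u" then have "a = u" using ac aS by blast
            then show ?thesis using aS u by simp
          qed
        qed
      next
        case False
        then obtain l where al: "a = u @ [l]" using a unfolding ch_def by auto
        show ?thesis
        proof (cases "b \<in> S'")
          case True
          have "prefix u b" using ab al by (metis prefix_order.trans prefixI)
          then have "u = b" using ac True by blast
          then show ?thesis using True u by simp
        next
          case False
          then obtain l' where "b = u @ [l']" using b unfolding ch_def by auto
          then show ?thesis using ab al by (simp add: prefix_snoc)
        qed
      qed
    qed
    have sub2: "S' \<union> ch X u \<subseteq> FG_elems X" using insert.prems ch_sub[OF u(3)] by auto
    have ne2: "[] \<notin> S' \<union> ch X u" using insert.prems unfolding ch_def by auto
    have I2: "finite (Fr X (S' \<union> ch X u) k) \<and> card (Fr X (S' \<union> ch X u) k) = ff (2 * card X - 1) (card (S' \<union> ch X u)) k"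
      using outer[OF _ sub2 ne2 ac2] insert.hyps chu by auto
    have c2: "card (S' \<union> ch X u) = card S' + (2 * card X - 1)"
      using card_Un_disjoint[OF insert.hyps(1) chu(1) disj] chu by simp
    note sp = Fr_split[OF insert.prems(3) u]
    have inj: "inj_on (insert u) (Fr X (S' \<union> ch X u) k)"
      using sp(3) by (intro inj_onI) (metis insert_ident)
    have dj: "Fr X S' (Suc k) \<inter> insert u ` Fr X (S' \<union> ch X u) k = {}"
      using sp(2) by blast
    have "card (Fr X (insert u S') (Suc k)) = card (Fr X S' (Suc k)) + card (Fr X (S' \<union> ch X u) k)"
      unfolding sp(1) using card_Un_disjoint[OF _ _ dj] IS' I2 card_image[OF inj] by auto
    also have "\<dots> = ff (2 * card X - 1) (card (insert u S')) (Suc k)"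
      using IS' I2 c2 insert.hyps by simp
    finally show ?case unfolding sp(1) using IS' I2 by auto
  qed
qed


definition slots :: "'a set \<Rightarrow> ('a \<times> bool) list \<Rightarrow> ('a \<times> bool) list set" where
  "slots X g = {c \<in> FG_elems X. c \<noteq> [] \<and> prefix (butlast c) g \<and> \<not> prefix c g}"

lemma slots_iff: "c \<in> slots X g \<longleftrightarrow> c \<in> FG_elems X \<and> c \<noteq> [] \<and> prefix (butlast c) g \<and> \<not> prefix c g"
  unfolding slots_def by simp

lemma nil_FG: "[] \<in> FG_elems X"
  unfolding FG_elems_def reduced_def by simp

lemma ch_iff: "u \<in> FG_elems X \<Longrightarrow> c \<in> ch X u \<longleftrightarrow> c \<in> FG_elems X \<and> c \<noteq> [] \<and> butlast c = u"
  using ch_alt[of u X] by blast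

lemma slots_nil: "slots X [] = ch X []"
proof (intro set_eqI)
  fix c show "c \<in> slots X [] \<longleftrightarrow> c \<in> ch X []"
    unfolding slots_iff ch_iff[OF nil_FG] prefix_Nil by blast
qed

lemma len_butlast_eq: "c \<noteq> [] \<Longrightarrow> butlast c = u \<Longrightarrow> length c = Suc (length u)"
  by (cases c rule: rev_cases) auto

lemma slots_snoc:
  assumes gl: "g @ [l] \<in> FG_elems X"
  shows "slots X (g @ [l]) = (slots X g - {g @ [l]}) \<union> ch X (g @ [l])"
proof (intro set_eqI iffI)
  fix c assume c: "c \<in> slots X (g @ [l])"
  then have c1: "c \<in> FG_elems X" "c \<noteq> []" "prefix (butlast c) (g @ [l])" "\<not> prefix c (g @ [l])"
    unfolding slots_iff by simp_all
  show "c \<in> (slots X g - {g @ [l]}) \<union> ch X (g @ [l])"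
  proof (cases "butlast c = g @ [l]")
    case True
    then have "c \<in> ch X (g @ [l])" using c1 ch_iff[OF gl] by blast
    then show ?thesis by blast
  next
    case False
    then have "prefix (butlast c) g" using c1(3) by simp
    moreover have "\<not> prefix c g" using c1(4) by auto
    moreover have "c \<noteq> g @ [l]" using c1(4) by auto
    ultimately have "c \<in> slots X g" using c1 unfolding slots_iff by simp
    then show ?thesis using \<open>c \<noteq> g @ [l]\<close> by simp
  qed
next
  fix c assume c: "c \<in> (slots X g - {g @ [l]}) \<union> ch X (g @ [l])"
  show "c \<in> slots X (g @ [l])"
  proof (cases "c \<in> ch X (g @ [l])")
    case True
    then have cc: "c \<in> FG_elems X" "c \<noteq> []" "butlast c = g @ [l]" using ch_iff[OF gl] by blast+
    have "\<not> prefix c (g @ [l])"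
    proof
      assume "prefix c (g @ [l])"
      then have "length c \<le> length (g @ [l])" by (rule prefix_length_le)
      moreover have "length c = Suc (length (g @ [l]))" using len_butlast_eq cc(2,3) by blast
      ultimately show False by simp
    qed
    then show ?thesis using cc unfolding slots_iff by simp
  next
    case False
    then have c1: "c \<in> FG_elems X" "c \<noteq> []" "prefix (butlast c) g" "\<not> prefix c g" "c \<noteq> g @ [l]"
      using c by (simp_all add: slots_iff)
    have "prefix (butlast c) (g @ [l])" using c1(3) by simp
    moreover have "\<not> prefix c (g @ [l])" using c1(4,5) by simp
    ultimately show ?thesis using c1 unfolding slots_iff by simp
  qed
qed

lemma slots_count:
  assumes X: "finite X" "card X \<ge> 1"
  shows "g \<in> FG_elems X \<Longrightarrow> finite (slots X g) \<and> card (slots X g) = 2 * card X + length g * (2 * card X - 2)"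
proof (induction g rule: rev_induct)
  case Nil
  then show ?case using card_ch[OF X(1) nil_FG] by (simp add: slots_nil)
next
  case (snoc l g)
  have gF: "g \<in> FG_elems X" using FG_butlast[OF snoc.prems] by simp
  note IH = snoc.IH[OF gF]
  have mem: "g @ [l] \<in> slots X g" using snoc.prems by (simp add: slots_iff)
  have chc: "finite (ch X (g @ [l]))" "card (ch X (g @ [l])) = 2 * card X - 1"
    using card_ch[OF X(1) snoc.prems] by auto
  have dj: "(slots X g - {g @ [l]}) \<inter> ch X (g @ [l]) = {}"
  proof (rule ccontr)
    assume "(slots X g - {g @ [l]}) \<inter> ch X (g @ [l]) \<noteq> {}"
    then obtain c where c: "c \<in> slots X g" "c \<in> ch X (g @ [l])" by blast
    then have "prefix (butlast c) g" "butlast c = g @ [l]" using ch_iff[OF snoc.prems] by (auto simp: slots_iff)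
    then have "length (g @ [l]) \<le> length g" using prefix_length_le by metis
    then show False by simp
  qed
  have "card (slots X (g @ [l])) = card (slots X g - {g @ [l]}) + card (ch X (g @ [l]))"
    unfolding slots_snoc[OF snoc.prems] using IH chc dj by (simp add: card_Un_disjoint)
  also have "\<dots> = card (slots X g) - 1 + (2 * card X - 1)"
    using IH mem chc by simp
  also have "\<dots> = 2 * card X + length (g @ [l]) * (2 * card X - 2)"
    using IH X(2) by (cases "card X") (auto simp: algebra_simps)
  finally show ?case using IH chc unfolding slots_snoc[OF snoc.prems] by simp
qed

lemma slots_props:
  assumes "g \<in> FG_elems X"
  shows "slots X g \<subseteq> FG_elems X" "[] \<notin> slots X g" "antichain (slots X g)"
proof -
  show "slots X g \<subseteq> FG_elems X" "[] \<notin> slots X g" by (auto simp: slots_iff)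
  show "antichain (slots X g)"
    unfolding antichain_def
  proof (intro ballI impI)
    fix a b assume a: "a \<in> slots X g" and b: "b \<in> slots X g" and ab: "prefix a b"
    show "a = b"
    proof (rule ccontr)
      assume "a \<noteq> b"
      then have "prefix a (butlast b)" using ab
        using b by (cases b rule: rev_cases) (auto simp: slots_iff)
      then have "prefix a g" using b prefix_order.trans by (auto simp: slots_iff)
      then show False using a by (simp add: slots_iff)
    qed
  qed
qed

definition RW :: "'a set \<Rightarrow> nat \<Rightarrow> ('a \<times> bool) list set" where
  "RW X t = {g \<in> FG_elems X. length g = t}"

lemma RW_Suc1: "w \<in> RW X (Suc t) \<Longrightarrow> butlast w \<in> RW X t \<and> w \<in> ch X (butlast w)"
proof -
  assume w: "w \<in> RW X (Suc t)"
  then have a: "w \<in> FG_elems X" "length w = Suc t" unfolding RW_def by simp_all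
  then have b: "butlast w \<in> FG_elems X" "w \<noteq> []" using FG_butlast by auto
  have "w \<in> ch X (butlast w)" using ch_iff[OF b(1), of w] a b by simp
  then show ?thesis using a b unfolding RW_def by simp
qed
lemma RW_Suc2: "u \<in> RW X t \<Longrightarrow> w \<in> ch X u \<Longrightarrow> w \<in> RW X (Suc t)"
proof -
  assume u: "u \<in> RW X t" and w: "w \<in> ch X u"
  then have a: "u \<in> FG_elems X" "length u = t" unfolding RW_def by simp_all
  have "w \<in> FG_elems X \<and> w \<noteq> [] \<and> butlast w = u" using ch_iff[OF a(1), of w] w by simp
  then show ?thesis using len_butlast_eq[of w u] a unfolding RW_def by simp
qed
lemma RW_count:
  assumes X: "finite X" "card X \<ge> 1"
  shows "finite (RW X t) \<and> card (RW X t) = (if t = 0 then 1 else 2 * card X * (2 * card X - 1) ^ (t - 1))"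
proof (induction t)
  case 0
  have "RW X 0 = {[]}" unfolding RW_def using nil_FG by auto
  then show ?case by simp
next
  case (Suc t)
  have eq: "RW X (Suc t) = (\<Union>u\<in>RW X t. ch X u)"
    using RW_Suc1[of _ X t] RW_Suc2[of _ X t] by blast
  have fin: "\<And>u. u \<in> RW X t \<Longrightarrow> finite (ch X u)" using card_ch[OF X(1)] unfolding RW_def by simp
  have dj: "pairwise (\<lambda>u v. ch X u \<inter> ch X v = {}) (RW X t)"
  proof (unfold pairwise_def, intro ballI impI)
    fix u v assume u: "u \<in> RW X t" and v: "v \<in> RW X t" and uv: "u \<noteq> v"
    have uF: "u \<in> FG_elems X" and vF: "v \<in> FG_elems X" using u v unfolding RW_def by simp_all
    show "ch X u \<inter> ch X v = {}"
    proof (rule ccontr)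
      assume "ch X u \<inter> ch X v \<noteq> {}"
      then obtain c where "c \<in> ch X u" "c \<in> ch X v" by blast
      then have "butlast c = u" "butlast c = v" using ch_iff[OF uF] ch_iff[OF vF] by simp_all
      then show False using uv by simp
    qed
  qed
  have c: "\<And>u. u \<in> RW X t \<Longrightarrow> card (ch X u) = (if t = 0 then 2 * card X else 2 * card X - 1)"
  proof -
    fix u assume "u \<in> RW X t"
    then have "u \<in> FG_elems X" "length u = t" unfolding RW_def by simp_all
    then show "card (ch X u) = (if t = 0 then 2 * card X else 2 * card X - 1)"
      using card_ch[OF X(1), of u] by (cases "t = 0") auto
  qed
  have fR: "finite (RW X t)" using Suc.IH by simp
  have dj2: "\<forall>u\<in>RW X t. \<forall>v\<in>RW X t. u \<noteq> v \<longrightarrow> ch X u \<inter> ch X v = {}"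
    using dj unfolding pairwise_def by blast
  have "card (RW X (Suc t)) = (\<Sum>u\<in>RW X t. card (ch X u))"
    unfolding eq by (rule card_UN_disjoint[OF fR]) (use fin dj2 in auto)
  also have "\<dots> = card (RW X t) * (if t = 0 then 2 * card X else 2 * card X - 1)"
    using c by simp
  finally have "card (RW X (Suc t)) = card (RW X t) * (if t = 0 then 2 * card X else 2 * card X - 1)" .
  moreover have "finite (RW X (Suc t))" unfolding eq using fR fin by blast
  moreover have "card (RW X t) * (if t = 0 then 2 * card X else 2 * card X - 1) =
      2 * card X * (2 * card X - 1) ^ (Suc t - 1)"
  proof (cases t)
    case 0 then show ?thesis using Suc.IH by simp
  next
    case (Suc t') then show ?thesis using Suc.IH by (simp add: algebra_simps)
  qed
  ultimately show ?case by simp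
qed


lemma M_iff: "(V, g) \<in> M X t k \<longleftrightarrow> finite V \<and> [] \<in> V \<and> V \<subseteq> FG_elems X \<and> (\<forall>w\<in>V. \<forall>n. take n w \<in> V)
   \<and> g \<in> V \<and> length g = t \<and> card V - 1 - length g = k"
  unfolding M_def FIM_def munn_tree_def trunk_edges_def branch_edges_def by auto

lemma Fr_closed:
  assumes W: "W \<in> Fr X S k" and S: "\<forall>s\<in>S. prefix (butlast s) g"
  shows "w \<in> W \<Longrightarrow> take n w \<in> W \<union> {a. prefix a g}"
proof (induction "length w" arbitrary: w rule: less_induct)
  case less
  show ?case
  proof (cases "n < length w")
    case False
    then show ?thesis using less.prems by simp
  next
    case True
    then have tb: "take n w = take n (butlast w)" by (simp add: take_butlast)
    have "w \<in> S \<or> (w \<noteq> [] \<and> butlast w \<in> W)" using W less.prems unfolding Fr_def by blast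
    then show ?thesis
    proof
      assume "w \<in> S"
      then have "prefix (butlast w) g" using S by blast
      then have "prefix (take n (butlast w)) g" using take_is_prefix prefix_order.trans by blast
      then show ?thesis using tb by simp
    next
      assume h: "w \<noteq> [] \<and> butlast w \<in> W"
      then have "length (butlast w) < length w" by simp
      then show ?thesis using less.hyps[of "butlast w"] h tb by simp
    qed
  qed
qed

lemma Fr_slots_disj:
  assumes "W \<in> Fr X (slots X g) k" "w \<in> W" shows "\<not> prefix w g"
proof
  assume wg: "prefix w g"
  obtain s where s: "s \<in> slots X g" "prefix s w" using Fr_prefix[OF assms] by blast
  then have "prefix s g" using wg prefix_order.trans by blast
  then show False using s(1) by (simp add: slots_iff)
qed

lemma pref_FG: "g \<in> FG_elems X \<Longrightarrow> {a. prefix a g} \<subseteq> FG_elems X"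
  using FG_prefix by blast

lemma card_pref: "finite {a. prefix a g} \<and> card {a. prefix a g} = Suc (length g)"
proof -
  have "{a. prefix a g} = set (prefixes g)" by (simp add: set_prefixes_eq)
  then show ?thesis by simp
qed

lemma M_image:
  "M X t k = (\<lambda>(g, W). (W \<union> {a. prefix a g}, g)) ` (SIGMA g:RW X t. Fr X (slots X g) k)"
proof (intro equalityI subsetI)
  fix m assume m: "m \<in> M X t k"
  obtain V g where m2: "m = (V, g)" by (cases m)
  have V: "finite V" "[] \<in> V" "V \<subseteq> FG_elems X" "\<forall>w\<in>V. \<forall>n. take n w \<in> V" "g \<in> V" "length g = t"
    "card V - 1 - length g = k" using m unfolding m2 M_iff by blast+
  have PV: "{a. prefix a g} \<subseteq> V"
  proof
    fix a assume "a \<in> {a. prefix a g}"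
    then have "a = take (length a) g" by (auto simp: prefix_def)
    then show "a \<in> V" using V(4,5) by metis
  qed
  have gF: "g \<in> FG_elems X" using V by blast
  have W: "V - {a. prefix a g} \<in> Fr X (slots X g) k"
    unfolding Fr_def
  proof (intro CollectI conjI ballI)
    show "finite (V - {a. prefix a g})" using V by simp
    show "card (V - {a. prefix a g}) = k"
      using card_Diff_subset[OF _ PV] card_pref[of g] V by simp
    show "V - {a. prefix a g} \<subseteq> FG_elems X" using V by blast
    fix w assume w: "w \<in> V - {a. prefix a g}"
    then have wne: "w \<noteq> []" by auto
    have bw: "butlast w \<in> V" using V(4) w by (metis DiffD1 butlast_conv_take)
    have wF: "w \<in> FG_elems X" using w V by blast
    show "w \<in> slots X g \<or> (w \<noteq> [] \<and> butlast w \<in> V - {a. prefix a g})"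
    proof (cases "prefix (butlast w) g")
      case True
      then have "w \<in> slots X g" using wF wne w by (simp add: slots_iff)
      then show ?thesis by blast
    next
      case False then show ?thesis using bw wne by simp
    qed
  qed
  have "m = (\<lambda>(g, W). (W \<union> {a. prefix a g}, g)) (g, V - {a. prefix a g})"
    using PV m2 by auto
  moreover have "(g, V - {a. prefix a g}) \<in> (SIGMA g:RW X t. Fr X (slots X g) k)"
    using W gF V(6) unfolding RW_def by simp
  ultimately show "m \<in> (\<lambda>(g, W). (W \<union> {a. prefix a g}, g)) ` (SIGMA g:RW X t. Fr X (slots X g) k)"
    by blast
next
  fix m assume "m \<in> (\<lambda>(g, W). (W \<union> {a. prefix a g}, g)) ` (SIGMA g:RW X t. Fr X (slots X g) k)"
  then obtain x where x: "x \<in> (SIGMA g:RW X t. Fr X (slots X g) k)" "m = (\<lambda>(g, W). (W \<union> {a. prefix a g}, g)) x"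
    by blast
  obtain g W where "x = (g, W)" by (cases x)
  then have gW: "g \<in> RW X t" "W \<in> Fr X (slots X g) k" "m = (W \<union> {a. prefix a g}, g)"
    using x by auto
  have gF: "g \<in> FG_elems X" "length g = t" using gW unfolding RW_def by simp_all
  have Wp: "finite W" "card W = k" "W \<subseteq> FG_elems X" using gW(2) unfolding Fr_def by simp_all
  have dj: "W \<inter> {a. prefix a g} = {}" using Fr_slots_disj[OF gW(2)] by blast
  have S: "\<forall>s\<in>slots X g. prefix (butlast s) g" by (simp add: slots_iff)
  have cl: "\<forall>w\<in>W \<union> {a. prefix a g}. \<forall>n. take n w \<in> W \<union> {a. prefix a g}"
  proof (intro ballI allI)
    fix w n assume w: "w \<in> W \<union> {a. prefix a g}"
    show "take n w \<in> W \<union> {a. prefix a g}"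
    proof (cases "w \<in> W")
      case True then show ?thesis using Fr_closed[OF gW(2) S] by blast
    next
      case False
      then have "prefix w g" using w by simp
      then have "prefix (take n w) g" using take_is_prefix prefix_order.trans by blast
      then show ?thesis by simp
    qed
  qed
  have cV: "card (W \<union> {a. prefix a g}) = k + Suc t"
    using card_Un_disjoint[OF Wp(1) _ dj] card_pref[of g] Wp gF by simp
  show "m \<in> M X t k"
    unfolding gW(3) M_iff
    using Wp pref_FG[OF gF(1)] cl cV gF card_pref[of g] by auto
qed

lemma M_inj: "inj_on (\<lambda>(g, W). (W \<union> {a. prefix a g}, g)) (SIGMA g:RW X t. Fr X (slots X g) k)"
proof (rule inj_onI)
  fix x y assume x: "x \<in> (SIGMA g:RW X t. Fr X (slots X g) k)" and y: "y \<in> (SIGMA g:RW X t. Fr X (slots X g) k)"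
    and e: "(\<lambda>(g, W). (W \<union> {a. prefix a g}, g)) x = (\<lambda>(g, W). (W \<union> {a. prefix a g}, g)) y"
  obtain g W where x2: "x = (g, W)" by (cases x)
  obtain g' W' where y2: "y = (g', W')" by (cases y)
  have gg: "g' = g" using e x2 y2 by simp
  have W: "W \<in> Fr X (slots X g) k" "W' \<in> Fr X (slots X g) k" using x y x2 y2 gg by auto
  have d1: "W \<inter> {a. prefix a g} = {}" "W' \<inter> {a. prefix a g} = {}"
    using Fr_slots_disj[OF W(1)] Fr_slots_disj[OF W(2)] by blast+
  have "W \<union> {a. prefix a g} = W' \<union> {a. prefix a g}" using e x2 y2 gg by simp
  then have "W = W'" using d1 by blast
  then show "x = y" using x2 y2 gg by simp
qed

lemma card_M:
  assumes X: "finite X" "card X \<ge> 1"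
  shows "card (M X t k) = card (RW X t) * ff (2 * card X - 1) (2 * card X + t * (2 * card X - 2)) k"
proof -
  have fR: "finite (RW X t)" using RW_count[OF X] by simp
  have each: "\<And>g. g \<in> RW X t \<Longrightarrow> finite (Fr X (slots X g) k) \<and>
       card (Fr X (slots X g) k) = ff (2 * card X - 1) (2 * card X + t * (2 * card X - 2)) k"
  proof -
    fix g assume g: "g \<in> RW X t"
    then have gF: "g \<in> FG_elems X" "length g = t" unfolding RW_def by simp_all
    have sc: "finite (slots X g) \<and> card (slots X g) = 2 * card X + length g * (2 * card X - 2)"
      using slots_count[OF X gF(1)] .
    show "finite (Fr X (slots X g) k) \<and>
       card (Fr X (slots X g) k) = ff (2 * card X - 1) (2 * card X + t * (2 * card X - 2)) k"
      using Fr_count[OF X, of "slots X g" k] sc slots_props[OF gF(1)] gF(2) by simp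
  qed
  have "card (M X t k) = card (SIGMA g:RW X t. Fr X (slots X g) k)"
    unfolding M_image using card_image[OF M_inj] .
  also have "\<dots> = (\<Sum>g\<in>RW X t. card (Fr X (slots X g) k))"
    by (rule card_SigmaI[OF fR]) (use each in blast)
  also have "\<dots> = (\<Sum>g\<in>RW X t. ff (2 * card X - 1) (2 * card X + t * (2 * card X - 2)) k)"
    by (rule sum.cong) (use each in auto)
  also have "\<dots> = card (RW X t) * ff (2 * card X - 1) (2 * card X + t * (2 * card X - 2)) k"
    by simp
  finally show ?thesis .
qed


lemma ff_step_identity:
  fixes A B N k p s :: int
  assumes h: "(k + 1) * (A + B) = (N + 1) * B" and hN: "N = (k + 1) * p + s"
  shows "(N + 1) * (s * A + (s + p) * B) = N * (s + 1) * (A + B)"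
  using h hN by algebra

lemma ff_closed:
  assumes p: "p \<ge> 1"
  shows "(k * p + s) * ff p s k = s * ((k * p + s) choose k)"
proof (induction k arbitrary: s)
  case 0
  then show ?case by (simp add: ff_0)
next
  case (Suc k)
  note outer = Suc.IH
  show ?case
  proof (induction s)
    case 0
    then show ?case by simp
  next
    case (Suc s)
    define N where "N = Suc k * p + s"
    define A where "A = N choose Suc k"
    define B where "B = N choose k"
    have IHs: "N * ff p s (Suc k) = s * A" using Suc.IH unfolding N_def A_def by simp
    have IHk: "N * ff p (s + p) k = (s + p) * B"
      using outer[of "s + p"] unfolding N_def B_def by (simp add: algebra_simps)
    have h0: "Suc N * B = (A + B) * Suc k"
      using Suc_times_binomial_eq[of N k] unfolding A_def B_def by simp
    have h: "(int k + 1) * (int A + int B) = (int N + 1) * int B"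
      using arg_cong[OF h0, of int] by (simp add: algebra_simps)
    have hN: "int N = (int k + 1) * int p + int s" unfolding N_def by (simp add: algebra_simps)
    have key: "(int N + 1) * (int s * int A + (int s + int p) * int B) = int N * (int s + 1) * (int A + int B)"
      by (rule ff_step_identity[OF h hN])
    have "N * ((N + 1) * ff p (Suc s) (Suc k)) = (N + 1) * (s * A + (s + p) * B)"
      using IHs IHk by (simp add: algebra_simps)
    also have "\<dots> = N * ((s + 1) * (A + B))"
      using key by (simp add: algebra_simps flip: of_nat_mult of_nat_add of_nat_Suc)
    finally have "(N + 1) * ff p (Suc s) (Suc k) = (s + 1) * (A + B)"
      using p unfolding N_def by simp
    moreover have "Suc k * p + Suc s = N + 1" unfolding N_def by simp
    moreover have "(N + 1) choose Suc k = A + B" unfolding A_def B_def by simp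
    ultimately show ?case by simp
  qed
qed


lemma ln_succ_bounds:
  assumes n: "(n::real) > 0"
  shows "ln (n + 1) - ln n \<le> 1 / n" and "ln (n + 1) - ln n \<ge> 1 / (n + 1)"
proof -
  have "1 + 1 / n = (n + 1) / n" using n by (simp add: field_simps)
  then have "ln (n + 1) - ln n = ln (1 + 1 / n)" using n by (simp add: ln_div)
  also have "\<dots> \<le> 1 / n" using n by (intro ln_add_one_self_le_self) simp
  finally show "ln (n + 1) - ln n \<le> 1 / n" .
  have "ln n - ln (n + 1) = ln (n / (n + 1))" using n by (simp add: ln_div)
  also have "\<dots> \<le> n / (n + 1) - 1" using n by (intro ln_le_minus_one) simp
  also have "\<dots> = - (1 / (n + 1))" using n by (simp add: field_simps)
  finally show "ln (n + 1) - ln n \<ge> 1 / (n + 1)" by simp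
qed

lemma fact_ln_bounds:
  assumes "n \<ge> 1"
  shows "1 \<le> ln (fact n) - real n * ln (real n) + real n
     \<and> ln (fact n) - real n * ln (real n) + real n \<le> 1 + ln (real n)"
  using assms
proof (induction n rule: nat_induct_at_least)
  case base
  then show ?case by simp
next
  case (Suc n)
  define d where "d = ln (real n + 1) - ln (real n)"
  have n0: "real n > 0" using Suc.hyps by simp
  have d1: "real n * d \<le> 1" using ln_succ_bounds(1)[OF n0] n0 unfolding d_def by (simp add: field_simps)
  have d2: "(real n + 1) * d \<ge> 1" using ln_succ_bounds(2)[OF n0] n0 unfolding d_def by (simp add: field_simps)
  have lf: "ln (fact (Suc n) :: real) = ln (real n + 1) + ln (fact n)"
    by (simp add: ln_mult add.commute)
  have e: "ln (fact (Suc n)) - real (Suc n) * ln (real (Suc n)) + real (Suc n)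
     = (ln (fact n) - real n * ln (real n) + real n) + 1 - real n * d"
    unfolding lf d_def by (simp add: algebra_simps)
  have e2: "1 + ln (real (Suc n)) = 1 + ln (real n) + d" unfolding d_def by (simp add: add.commute)
  show ?case using Suc.IH d1 d2 unfolding e e2 by (simp add: algebra_simps)
qed

lemma fact_ln_bounds0:
  "real n * ln (real n) - real n \<le> ln (fact n) \<and> ln (fact n) \<le> real n * ln (real n) - real n + 1 + ln (real n + 1)"
proof (cases "n \<ge> 1")
  case True
  have "ln (real n) \<le> ln (real n + 1)" using True by simp
  then show ?thesis using fact_ln_bounds[OF True] by linarith
next
  case False
  then have "n = 0" by simp
  then show ?thesis by simp
qed

definition Ent :: "real \<Rightarrow> real \<Rightarrow> real" where
  "Ent N k = N * ln N - k * ln k - (N - k) * ln (N - k)"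

lemma lnC_aux:
  fixes fN fk fd aN ak ad lk ld lN :: real
  assumes "aN - N \<le> fN" "fN \<le> aN - N + 1 + lN" "ak - k \<le> fk" "fk \<le> ak - k + 1 + lk"
    "ad - (N - k) \<le> fd" "fd \<le> ad - (N - k) + 1 + ld" "lk \<le> lN" "ld \<le> lN" "0 \<le> lN"
  shows "\<bar>(fN - fk - fd) - (aN - ak - ad)\<bar> \<le> 2 * (1 + lN)"
  using assms by (simp add: abs_le_iff)

lemma lnC_bounds:
  assumes "k \<le> N"
  shows "\<bar>ln (real (N choose k)) - Ent (real N) (real k)\<bar> \<le> 2 * (1 + ln (real N + 1))"
proof -
  have C: "real (N choose k) = fact N / (fact k * fact (N - k))"
    using binomial_fact[OF assms] by simp
  have pos: "(fact k :: real) > 0" "(fact (N - k) :: real) > 0" "(fact N :: real) > 0" by auto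
  have lnC: "ln (real (N choose k)) = ln (fact N) - ln (fact k) - ln (fact (N - k))"
    unfolding C using pos by (simp add: ln_div ln_mult)
  have rk: "real (N - k) = real N - real k" using assms by simp
  have m1: "ln (real k + 1) \<le> ln (real N + 1)" using assms by (subst ln_le_cancel_iff) auto
  have m2: "ln (real (N - k) + 1) \<le> ln (real N + 1)" using assms by (subst ln_le_cancel_iff) auto
  have l0: "0 \<le> ln (real N + 1)" by simp
  have "\<bar>(ln (fact N) - ln (fact k) - ln (fact (N - k))) - (real N * ln (real N) - real k * ln (real k) - real (N - k) * ln (real (N - k)))\<bar> \<le> 2 * (1 + ln (real N + 1))"
    apply (rule lnC_aux[where N = "real N" and k = "real k"])
    using fact_ln_bounds0[of N] fact_ln_bounds0[of k] fact_ln_bounds0[of "N - k"] m1 m2 l0 rk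
    by auto
  then show ?thesis unfolding lnC Ent_def rk .
qed

lemma lnC_upper:
  assumes "1 \<le> k" "k \<le> N"
  shows "ln (real (N choose k)) \<le> real k * (1 + ln (real N) - ln (real k))"
proof -
  have b: "real (N choose k) * fact k \<le> real N ^ k"
  proof -
    have "real ((N choose k) * fact k) \<le> real (N ^ k)"
      using binomial_fact_pow[of N k] by (simp only: of_nat_le_iff)
    then show ?thesis by simp
  qed
  have pos: "real (N choose k) > 0" using assms by simp
  have fk: "(fact k :: real) > 0" by simp
  have N0: "real N > 0" using assms by simp
  have "ln (real (N choose k) * fact k) \<le> ln (real N ^ k)"
    using b pos fk N0 by (subst ln_le_cancel_iff) auto
  then have "ln (real (N choose k)) + ln (fact k) \<le> real k * ln (real N)"
    using pos fk N0 by (simp add: ln_mult ln_realpow)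
  then show ?thesis using fact_ln_bounds0[of k] by (simp add: algebra_simps)
qed


definition sz :: "nat \<Rightarrow> nat \<Rightarrow> nat" where "sz P t = P + 1 + t * (P - 1)"
definition Nz :: "nat \<Rightarrow> nat \<Rightarrow> nat \<Rightarrow> nat" where "Nz P t k = k * P + sz P t"

definition Mc :: "nat \<Rightarrow> nat \<Rightarrow> nat \<Rightarrow> real" where
  "Mc P t k = real (P + 1) * real P ^ (t - 1) * (real (sz P t) / real (Nz P t k)) * real (Nz P t k choose k)"

lemma Nz_ge:
  fixes P t k :: nat
  assumes "P \<ge> 3"
  shows "Nz P t k > k \<and> Nz P t k \<ge> sz P t \<and> sz P t \<ge> 1"
proof -
  have *: "k \<le> k * P" using assms by simp
  show ?thesis unfolding Nz_def sz_def using * by (intro conjI) linarith+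
qed

lemma Mc_pos: "P \<ge> 3 \<Longrightarrow> Mc P t k > 0"
proof -
  assume P: "P \<ge> 3"
  have n: "Nz P t k > k" "Nz P t k \<ge> sz P t" "sz P t \<ge> 1" using Nz_ge[OF P] by auto
  then have "real (Nz P t k choose k) > 0" by simp
  moreover have "real (sz P t) / real (Nz P t k) > 0" using n by simp
  moreover have "real (P + 1) * real P ^ (t - 1) > 0" using P by simp
  ultimately show ?thesis unfolding Mc_def using P by (intro mult_pos_pos) auto
qed

lemma ln_Mc: assumes "P \<ge> 3"
  shows "ln (Mc P t k) = ln (real P + 1) + real (t - 1) * ln (real P) + (ln (real (sz P t)) - ln (real (Nz P t k)))
     + ln (real (Nz P t k choose k))"
proof -
  have n: "Nz P t k > k" "Nz P t k \<ge> sz P t" "sz P t \<ge> 1" using Nz_ge[OF assms] by auto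
  have pos: "real P > 0" "real (sz P t) > 0" "real (Nz P t k) > 0" "real (Nz P t k choose k) > 0"
    using n assms by auto
  show ?thesis unfolding Mc_def using pos
    by (simp add: ln_mult ln_div ln_realpow add.commute)
qed

lemma ln_s_N: assumes "P \<ge> 3"
  shows "ln (real (sz P t)) - ln (real (Nz P t k)) \<le> 0"
    and "ln (real (sz P t)) - ln (real (Nz P t k)) \<ge> - ln (real (Nz P t k))"
proof -
  have n: "Nz P t k > k" "Nz P t k \<ge> sz P t" "sz P t \<ge> 1" using Nz_ge[OF assms] by auto
  then show "ln (real (sz P t)) - ln (real (Nz P t k)) \<le> 0" by simp
  have "ln (real (sz P t)) \<ge> 0" using n by simp
  then show "ln (real (sz P t)) - ln (real (Nz P t k)) \<ge> - ln (real (Nz P t k))" by simp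
qed

lemma LB_aux:
  fixes a e l n lp x d :: real
  assumes "a - e \<le> 2 * (1 + l)" "- (a - e) \<le> 2 * (1 + l)" "n \<le> l" "0 \<le> lp" "0 \<le> l" "d \<le> 0" "- n \<le> d"
  shows "\<bar>lp + x + d + a - (x + e)\<bar> \<le> lp + 3 * l + 2"
  using assms by (simp add: abs_le_iff)

lemma LB: assumes "P \<ge> 3"
  shows "\<bar>ln (Mc P t k) - (real (t - 1) * ln (real P) + Ent (real (Nz P t k)) (real k))\<bar>
     \<le> ln (real P + 1) + 3 * ln (real (Nz P t k) + 1) + 2"
proof -
  have n: "k \<le> Nz P t k" using Nz_ge[OF assms, where t=t and k=k] by simp
  have b: "\<bar>ln (real (Nz P t k choose k)) - Ent (real (Nz P t k)) (real k)\<bar> \<le> 2 * (1 + ln (real (Nz P t k) + 1))"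
    using lnC_bounds[OF n] .
  note b1 = b[unfolded abs_le_iff, THEN conjunct1] and b2 = b[unfolded abs_le_iff, THEN conjunct2]
  have l1: "ln (real (Nz P t k)) \<le> ln (real (Nz P t k) + 1)"
    using Nz_ge[OF assms, where t=t and k=k] by (subst ln_le_cancel_iff) auto
  have l2: "0 \<le> ln (real P + 1)" "0 \<le> ln (real (Nz P t k) + 1)" by simp_all
  show ?thesis unfolding ln_Mc[OF assms]
    by (rule LB_aux[OF b1 b2 l1 l2 ln_s_N[OF assms, where t=t and k=k]])
qed

lemma negqlnq:
  assumes "0 < q" "q \<le> (1::real)"
  shows "- (q * ln q) \<le> 2 * sqrt q"
proof -
  have sq: "sqrt q > 0" using assms by simp
  have "ln (1 / sqrt q) \<le> 1 / sqrt q - 1" using sq by (intro ln_le_minus_one) simp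
  then have a: "- ln (sqrt q) \<le> 1 / sqrt q - 1" using sq by (simp add: ln_div)
  have b: "ln q = 2 * ln (sqrt q)"
    using assms by (simp add: ln_sqrt)
  have "- (q * ln q) = 2 * q * (- ln (sqrt q))" unfolding b by simp
  also have "\<dots> \<le> 2 * q * (1 / sqrt q - 1)" using a assms by (intro mult_left_mono) auto
  also have "\<dots> \<le> 2 * q * (1 / sqrt q)" using assms by (intro mult_left_mono) auto
  also have "\<dots> = 2 * (q / sqrt q)" by simp
  also have "\<dots> = 2 * sqrt q" using assms by (simp add: real_div_sqrt)
  finally show ?thesis .
qed


definition cU :: "nat \<Rightarrow> real" where "cU P = 1 + ln (2 * (real P + 1))"

lemma Nz_le:
  assumes "P \<ge> 3" "t \<ge> 1"
  shows "real (Nz P t k) \<le> 2 * (real P + 1) * real (t + 2 * k)"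
proof -
  have r: "real (Nz P t k) = real k * real P + real P + 1 + real t * (real P - 1)"
    using assms unfolding Nz_def sz_def by (simp add: of_nat_diff)
  have a: "0 \<le> real P * (real t - 1)" using assms by simp
  have b: "0 \<le> real P * real k" by simp
  have "2 * (real P + 1) * real (t + 2 * k) - real (Nz P t k) = real P * (real t - 1) + 3 * real t - 1 + 3 * (real P * real k) + 4 * real k"
    unfolding r by (simp add: algebra_simps)
  moreover have "real P * (real t - 1) + 3 * real t - 1 + 3 * (real P * real k) + 4 * real k \<ge> 0"
  proof -
    have "real t \<ge> 1" using assms by simp
    then show ?thesis using a b by linarith
  qed
  ultimately show ?thesis by simp
qed

lemma lnC_q:
  assumes P: "P \<ge> 3" and t: "t \<ge> 1"
  shows "ln (real (Nz P t k choose k)) \<le> real (t + 2 * k) * ((cU P + 2) * sqrt (real k / real (t + 2 * k)))"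
proof (cases "k = 0")
  case True
  then show ?thesis by simp
next
  case False
  define K where "K = real (t + 2 * k)"
  define q where "q = real k / K"
  have K0: "K > 0" using t unfolding K_def by simp
  have k0: "real k > 0" using False by simp
  have q0: "q > 0" "q \<le> 1" using K0 k0 unfolding q_def K_def by auto
  have kN: "k \<le> Nz P t k" using Nz_ge[OF P, where t=t and k=k] by simp
  have N0: "real (Nz P t k) > 0" using Nz_ge[OF P, where t=t and k=k] by simp
  have c0: "cU P \<ge> 0" unfolding cU_def by simp
  have "ln (real (Nz P t k)) \<le> ln (2 * (real P + 1) * K)"
    using Nz_le[OF P t, of k] N0 unfolding K_def by (subst ln_le_cancel_iff) auto
  also have "\<dots> = ln (2 * (real P + 1)) + ln K" using K0 by (simp add: ln_mult)
  finally have lnN: "ln (real (Nz P t k)) \<le> ln (2 * (real P + 1)) + ln K" .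
  have lq: "ln q = ln (real k) - ln K" unfolding q_def using k0 K0 by (simp add: ln_div)
  have "ln (real (Nz P t k choose k)) \<le> real k * (1 + ln (real (Nz P t k)) - ln (real k))"
    using lnC_upper[of k "Nz P t k"] False kN by simp
  also have "\<dots> \<le> real k * (cU P + ln K - ln (real k))"
    using lnN k0 unfolding cU_def by (intro mult_left_mono) auto
  also have "\<dots> = K * (q * cU P + (- (q * ln q)))"
    unfolding lq using K0 by (simp add: q_def field_simps)
  also have "\<dots> \<le> K * (sqrt q * cU P + 2 * sqrt q)"
  proof -
    have s1: "sqrt q \<le> 1" "sqrt q \<ge> 0" using q0 by simp_all
    have "q = sqrt q * sqrt q" using q0 by simp
    also have "\<dots> \<le> sqrt q * 1" using s1 by (intro mult_left_mono) auto
    finally have "q \<le> sqrt q" by simp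
    then have "q * cU P \<le> sqrt q * cU P" using c0 by (intro mult_right_mono) auto
    moreover have "- (q * ln q) \<le> 2 * sqrt q" using negqlnq[OF q0] .
    ultimately show ?thesis using K0 by (intro mult_left_mono) auto
  qed
  also have "\<dots> = K * ((cU P + 2) * sqrt q)" by (simp add: algebra_simps)
  finally show ?thesis unfolding K_def q_def .
qed

lemma QU:
  assumes P: "P \<ge> 3" and t: "t \<ge> 1"
  shows "ln (Mc P t k) / real (t + 2 * k) \<le> ln (real P + 1) / real (t + 2 * k) + ln (real P)
     + (cU P + 2) * sqrt (real k / real (t + 2 * k))"
proof -
  define K where "K = real (t + 2 * k)"
  have K0: "K > 0" using t unfolding K_def by simp
  have lP: "ln (real P) \<ge> 0" using P by simp
  have tK: "real (t - 1) \<le> K" unfolding K_def by simp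
  have a: "real (t - 1) * ln (real P) \<le> K * ln (real P)" using tK lP by (intro mult_right_mono) auto
  have "ln (Mc P t k) \<le> ln (real P + 1) + K * ln (real P) + K * ((cU P + 2) * sqrt (real k / K))"
    unfolding ln_Mc[OF P] using a ln_s_N(1)[OF P, where t=t and k=k] lnC_q[OF P t, of k]
    unfolding K_def by simp
  then have "ln (Mc P t k) / K \<le> (ln (real P + 1) + K * ln (real P) + K * ((cU P + 2) * sqrt (real k / K))) / K"
    using K0 by (intro divide_right_mono) auto
  also have "\<dots> = ln (real P + 1) / K + ln (real P) + (cU P + 2) * sqrt (real k / K)"
    using K0 by (simp add: field_simps)
  finally show ?thesis unfolding K_def .
qed


definition phi :: "real \<Rightarrow> real" where "phi a = a * ln a - (a - 1) * ln (a - 1)"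

lemma Ent_phi:
  assumes "k > 0" "N > k"
  shows "Ent N k = k * phi (N / k)"
proof -
  have a: "N / k - 1 = (N - k) / k" using assms by (simp add: field_simps)
  have p: "N > 0" "N - k > 0" using assms by auto
  show ?thesis unfolding Ent_def phi_def a using assms p
    by (simp add: ln_div field_simps)
qed

lemma main_form:
  assumes P: "P \<ge> 3" and t: "t \<ge> 1" and k: "k \<ge> 1"
  defines "\<rho> \<equiv> (real t - 1) / real k"
  shows "(real (t - 1) * ln (real P) + Ent (real (Nz P t k)) (real k)) / real (t + 2 * k)
     = (\<rho> * ln (real P) + phi (real P + 2 * real P / real k + \<rho> * (real P - 1))) / (\<rho> + 2 + 1 / real k)"
proof -
  have k0: "real k > 0" using k by simp
  have Nk: "real (Nz P t k) > real k" using Nz_ge[OF P, where t=t and k=k] by simp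
  have NN: "real (Nz P t k) / real k = real P + 2 * real P / real k + \<rho> * (real P - 1)"
    unfolding \<rho>_def Nz_def sz_def using k0 t P by (simp add: of_nat_diff field_simps)
  have KK: "real (t + 2 * k) = real k * (\<rho> + 2 + 1 / real k)"
    unfolding \<rho>_def using k0 by (simp add: field_simps)
  have tt: "real (t - 1) = real k * \<rho>" unfolding \<rho>_def using k0 t by (simp add: of_nat_diff)
  have num: "real (t - 1) * ln (real P) + Ent (real (Nz P t k)) (real k)
     = real k * (\<rho> * ln (real P) + phi (real P + 2 * real P / real k + \<rho> * (real P - 1)))"
    unfolding Ent_phi[OF k0 Nk] NN tt by (simp add: algebra_simps)
  show ?thesis unfolding num KK using k0 by simp
qed


lemma hfun_phi: "hfun p x = (x * ln p + phi (p + x * (p - 1))) / (x + 2)"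
proof -
  have e2: "p + x * (p - 1) - 1 = (p - 1) + x * (p - 1)" by simp
  show ?thesis unfolding hfun_def phi_def e2 by (simp add: divide_inverse mult.commute)
qed

lemma lim_iii:
  fixes P :: nat and T kk :: "nat \<Rightarrow> nat" and x :: real
  assumes P: "P \<ge> 3" and T: "\<And>n. T n \<ge> 1" and k: "\<And>n. kk n \<ge> 1" and x: "x \<ge> 0"
    and Kinf: "filterlim (\<lambda>n. real (T n + 2 * kk n)) at_top sequentially"
    and rho: "(\<lambda>n. (real (T n) - 1) / real (kk n)) \<longlonglongrightarrow> x"
  shows "(\<lambda>n. ln (Mc P (T n) (kk n)) / real (T n + 2 * kk n)) \<longlonglongrightarrow> hfun (real P) x"
proof -
  define K where "K n = real (T n + 2 * kk n)" for n
  define \<rho> where "\<rho> n = (real (T n) - 1) / real (kk n)" for n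
  define mv where "mv n = (real (T n - 1) * ln (real P) + Ent (real (Nz P (T n) (kk n))) (real (kk n))) / K n" for n
  have K1: "K n \<ge> 1" for n using T[of n] unfolding K_def by simp
  have k0: "real (kk n) > 0" for n using k[of n] by simp
  have r0: "\<rho> n \<ge> 0" for n using T[of n] k0[of n] unfolding \<rho>_def by simp
  have Kinf': "filterlim K at_top sequentially" using Kinf unfolding K_def .
  have iK: "(\<lambda>n. 1 / K n) \<longlonglongrightarrow> 0"
    using tendsto_inverse_0_at_top[OF Kinf'] by (simp add: divide_inverse)
  have rho': "\<rho> \<longlonglongrightarrow> x" using rho unfolding \<rho>_def .
  have ik: "(\<lambda>n. 1 / real (kk n)) \<longlonglongrightarrow> 0"
  proof (rule tendsto_sandwich[of "\<lambda>n. 0" _ _ "\<lambda>n. (\<rho> n + 3) * (1 / K n)"])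
    show "\<forall>\<^sub>F n in sequentially. 0 \<le> 1 / real (kk n)" by simp
    show "\<forall>\<^sub>F n in sequentially. 1 / real (kk n) \<le> (\<rho> n + 3) * (1 / K n)"
    proof (rule always_eventually, rule allI)
      fix n
      have KK: "K n = real (kk n) * (\<rho> n + 2 + 1 / real (kk n))"
        unfolding K_def \<rho>_def using k0[of n] by (simp add: field_simps)
      have "1 / real (kk n) \<le> 1" using k[of n] by simp
      then have "K n \<le> real (kk n) * (\<rho> n + 3)" unfolding KK using k0[of n] by (intro mult_left_mono) auto
      then show "1 / real (kk n) \<le> (\<rho> n + 3) * (1 / K n)"
        using k0[of n] K1[of n] r0[of n] by (simp add: field_simps)
    qed
    show "(\<lambda>n. 0) \<longlonglongrightarrow> (0::real)" by simp
    have "(\<lambda>n. (\<rho> n + 3) * (1 / K n)) \<longlonglongrightarrow> (x + 3) * 0"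
      by (intro tendsto_intros rho' iK)
    then show "(\<lambda>n. (\<rho> n + 3) * (1 / K n)) \<longlonglongrightarrow> 0" by simp
  qed
  have mv_eq: "mv n = (\<rho> n * ln (real P) + phi (real P + 2 * real P / real (kk n) + \<rho> n * (real P - 1))) / (\<rho> n + 2 + 1 / real (kk n))" for n
    unfolding mv_def K_def \<rho>_def using main_form[OF P T[of n] k[of n]] by simp
  have a0: "real P + 0 + x * (real P - 1) > 1"
  proof -
    have "x * (real P - 1) \<ge> 0" using x P by simp
    moreover have "real P \<ge> 3" using P by simp
    ultimately show ?thesis by simp
  qed
  have lim_a: "(\<lambda>n. real P + 2 * real P / real (kk n) + \<rho> n * (real P - 1)) \<longlonglongrightarrow> real P + 0 + x * (real P - 1)"
  proof -
    have "(\<lambda>n. real P + 2 * real P * (1 / real (kk n)) + \<rho> n * (real P - 1)) \<longlonglongrightarrow> real P + 2 * real P * 0 + x * (real P - 1)"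
      by (intro tendsto_intros ik rho')
    then show ?thesis by simp
  qed
  have lim_phi: "(\<lambda>n. phi (real P + 2 * real P / real (kk n) + \<rho> n * (real P - 1))) \<longlonglongrightarrow> phi (real P + 0 + x * (real P - 1))"
    unfolding phi_def using a0 by (intro tendsto_intros lim_a) auto
  have lim_mv0: "mv \<longlonglongrightarrow> (x * ln (real P) + phi (real P + 0 + x * (real P - 1))) / (x + 2 + 0)"
    unfolding mv_eq using x
    by (intro tendsto_intros lim_phi rho' ik) auto
  have lim_mv: "mv \<longlonglongrightarrow> hfun (real P) x"
    using lim_mv0 unfolding hfun_phi by simp
  define c0 where "c0 = ln (real P + 1) + 2 + 3 * ln (2 * real P + 3)"
  have err: "\<bar>ln (Mc P (T n) (kk n)) / K n - mv n\<bar> \<le> c0 * (1 / K n) + 3 * (ln (K n) / K n)" for n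
  proof -
    have b: "\<bar>ln (Mc P (T n) (kk n)) - (real (T n - 1) * ln (real P) + Ent (real (Nz P (T n) (kk n))) (real (kk n)))\<bar>
        \<le> ln (real P + 1) + 3 * ln (real (Nz P (T n) (kk n)) + 1) + 2" by (rule LB[OF P])
    have "real (Nz P (T n) (kk n)) + 1 \<le> 2 * (real P + 1) * K n + K n"
      using Nz_le[OF P T[of n], of "kk n"] K1[of n] unfolding K_def by simp
    also have "\<dots> = (2 * real P + 3) * K n" by (simp add: algebra_simps)
    finally have "ln (real (Nz P (T n) (kk n)) + 1) \<le> ln ((2 * real P + 3) * K n)"
      using K1[of n] by (subst ln_le_cancel_iff) auto
    also have "\<dots> = ln (2 * real P + 3) + ln (K n)" using K1[of n] by (simp add: ln_mult)
    finally have l: "ln (real (Nz P (T n) (kk n)) + 1) \<le> ln (2 * real P + 3) + ln (K n)" .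
    have "\<bar>ln (Mc P (T n) (kk n)) / K n - mv n\<bar>
        = \<bar>ln (Mc P (T n) (kk n)) - (real (T n - 1) * ln (real P) + Ent (real (Nz P (T n) (kk n))) (real (kk n)))\<bar> / K n"
      unfolding mv_def using K1[of n] by (simp add: diff_divide_distrib[symmetric])
    also have "\<dots> \<le> (c0 + 3 * ln (K n)) / K n"
      using b l K1[of n] unfolding c0_def by (intro divide_right_mono) auto
    also have "\<dots> = c0 * (1 / K n) + 3 * (ln (K n) / K n)" by (simp add: add_divide_distrib)
    finally show ?thesis .
  qed
  have lnK: "(\<lambda>n. ln (K n) / K n) \<longlonglongrightarrow> 0"
    using filterlim_compose[OF ln_x_over_x_tendsto_0 Kinf'] .
  have errlim: "(\<lambda>n. c0 * (1 / K n) + 3 * (ln (K n) / K n)) \<longlonglongrightarrow> c0 * 0 + 3 * 0"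
    by (intro tendsto_intros iK lnK)
  have d0: "(\<lambda>n. ln (Mc P (T n) (kk n)) / K n - mv n) \<longlonglongrightarrow> 0"
  proof (rule tendsto_sandwich[of "\<lambda>n. - (c0 * (1 / K n) + 3 * (ln (K n) / K n))" _ _ "\<lambda>n. c0 * (1 / K n) + 3 * (ln (K n) / K n)"])
    show "\<forall>\<^sub>F n in sequentially. - (c0 * (1 / K n) + 3 * (ln (K n) / K n)) \<le> ln (Mc P (T n) (kk n)) / K n - mv n"
    proof (intro always_eventually allI)
      fix n show "- (c0 * (1 / K n) + 3 * (ln (K n) / K n)) \<le> ln (Mc P (T n) (kk n)) / K n - mv n"
        using abs_le_D2[OF err[of n]] minus_le_iff by blast
    qed
    show "\<forall>\<^sub>F n in sequentially. ln (Mc P (T n) (kk n)) / K n - mv n \<le> c0 * (1 / K n) + 3 * (ln (K n) / K n)"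
    proof (intro always_eventually allI)
      fix n show "ln (Mc P (T n) (kk n)) / K n - mv n \<le> c0 * (1 / K n) + 3 * (ln (K n) / K n)"
        using abs_le_D1[OF err[of n]] by blast
    qed
    show "(\<lambda>n. c0 * (1 / K n) + 3 * (ln (K n) / K n)) \<longlonglongrightarrow> 0" using errlim by simp
    show "(\<lambda>n. - (c0 * (1 / K n) + 3 * (ln (K n) / K n))) \<longlonglongrightarrow> 0"
      using tendsto_minus[OF errlim] by simp
  qed
  have "(\<lambda>n. mv n + (ln (Mc P (T n) (kk n)) / K n - mv n)) \<longlonglongrightarrow> hfun (real P) x + 0"
    by (intro tendsto_intros lim_mv d0)
  then show ?thesis unfolding K_def by simp
qed


lemma ub_generic:
  fixes a :: "nat \<Rightarrow> real"
  assumes lim: "a \<longlonglongrightarrow> y" and fr: "\<And>\<epsilon> m. \<epsilon> > 0 \<Longrightarrow> \<exists>i\<ge>m. a i \<le> exp (c + \<epsilon>)"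
  shows "y \<le> exp c"
proof (rule ccontr)
  assume "\<not> y \<le> exp c"
  then have y: "y > exp c" by simp
  then have y0: "y > 0" using exp_gt_zero less_trans by blast
  define \<epsilon> where "\<epsilon> = (ln y - c) / 2"
  have lc: "ln y > c" using y y0 by (metis exp_less_cancel_iff exp_ln)
  then have e0: "\<epsilon> > 0" unfolding \<epsilon>_def by simp
  have "c + \<epsilon> < ln y" using lc unfolding \<epsilon>_def by (simp add: field_simps)
  then have lt: "exp (c + \<epsilon>) < y" using y0 by (metis exp_less_cancel_iff exp_ln)
  have "\<forall>\<^sub>F i in sequentially. exp (c + \<epsilon>) < a i" using order_tendstoD(1)[OF lim lt] .
  then obtain m where m: "\<And>i. i \<ge> m \<Longrightarrow> exp (c + \<epsilon>) < a i" unfolding eventually_sequentially by blast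
  obtain i where "i \<ge> m" "a i \<le> exp (c + \<epsilon>)" using fr[OF e0, of m] by blast
  then show False using m by fastforce
qed

lemma unbounded_freq:
  fixes f :: "nat \<Rightarrow> real"
  assumes "\<not> bdd_above (range f)"
  shows "\<exists>i\<ge>m. f i > R"
proof (rule ccontr)
  assume "\<not> (\<exists>i\<ge>m. f i > R)"
  then have h: "\<And>i. i \<ge> m \<Longrightarrow> f i \<le> R" by (simp add: not_less)
  define M where "M = Max (f ` {..<m} \<union> {R})"
  have "\<forall>x\<in>range f. x \<le> M"
  proof
    fix x assume "x \<in> range f"
    then obtain i where x: "x = f i" by blast
    show "x \<le> M"
    proof (cases "i \<ge> m")
      case True
      have "R \<le> M" unfolding M_def by (intro Max_ge) auto
      then show ?thesis using h[OF True] x by linarith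
    next
      case False
      then have "f i \<in> f ` {..<m} \<union> {R}" by simp
      then have "f i \<le> Max (f ` {..<m} \<union> {R})" by (intro Max_ge) auto
      then show ?thesis using x unfolding M_def by blast
    qed
  qed
  then have "bdd_above (range f)" unfolding bdd_above_def by blast
  then show False using assms by simp
qed

lemma exp_form:
  assumes "P \<ge> 3"
  shows "Mc P t k powr (1 / real (t + 2 * k)) = exp (ln (Mc P t k) / real (t + 2 * k))"
  using Mc_pos[OF assms, of t k] unfolding powr_def by simp

lemma part_i:
  fixes t k :: "nat \<Rightarrow> nat" and B :: nat
  assumes P: "P \<ge> 3" and t: "\<And>i. t i \<ge> 1" and kB: "\<And>i. k i \<le> B"
    and Kinf: "filterlim (\<lambda>i. real (t i + 2 * k i)) at_top sequentially"
    and lim: "(\<lambda>i. exp (ln (Mc P (t i) (k i)) / real (t i + 2 * k i))) \<longlonglongrightarrow> y"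
  shows "y \<le> real P"
proof -
  define K where "K i = real (t i + 2 * k i)" for i
  have K0: "K i > 0" for i using t[of i] unfolding K_def by simp
  have iK: "(\<lambda>i. 1 / K i) \<longlonglongrightarrow> 0"
    using tendsto_inverse_0_at_top[OF Kinf] unfolding K_def by (simp add: divide_inverse)
  define b where "b i = ln (real P + 1) * (1 / K i) + (cU P + 2) * sqrt (real B * (1 / K i))" for i
  have bl: "b \<longlonglongrightarrow> ln (real P + 1) * 0 + (cU P + 2) * sqrt (real B * 0)"
    unfolding b_def by (intro tendsto_intros iK)
  then have bl0: "b \<longlonglongrightarrow> 0" by simp
  have bnd: "exp (ln (Mc P (t i) (k i)) / K i) \<le> exp (ln (real P) + b i)" for i
  proof -
    have "sqrt (real (k i) / K i) \<le> sqrt (real B * (1 / K i))"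
      using kB[of i] K0[of i] by (simp add: divide_right_mono)
    moreover have "cU P + 2 \<ge> 0" unfolding cU_def by simp
    ultimately have "(cU P + 2) * sqrt (real (k i) / K i) \<le> (cU P + 2) * sqrt (real B * (1 / K i))"
      by (intro mult_left_mono) auto
    then show ?thesis using QU[OF P t[of i], of "k i"] unfolding b_def K_def by simp
  qed
  have "y \<le> exp (ln (real P))"
  proof (rule ub_generic[OF lim])
    fix \<epsilon> :: real and m assume e: "\<epsilon> > 0"
    have "\<forall>\<^sub>F i in sequentially. b i < \<epsilon>" using order_tendstoD(2)[OF bl0 e] .
    then obtain m0 where m0: "\<And>i. i \<ge> m0 \<Longrightarrow> b i < \<epsilon>" unfolding eventually_sequentially by blast
    define i where "i = max m m0"
    have "exp (ln (Mc P (t i) (k i)) / real (t i + 2 * k i)) \<le> exp (ln (real P) + \<epsilon>)"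
      using bnd[of i] m0[of i] unfolding i_def K_def by (smt (verit) exp_le_cancel_iff max.cobounded2)
    then show "\<exists>i\<ge>m. exp (ln (Mc P (t i) (k i)) / real (t i + 2 * k i)) \<le> exp (ln (real P) + \<epsilon>)"
      unfolding i_def by (intro exI[of _ "max m m0"]) auto
  qed
  then show ?thesis using P by simp
qed

lemma part_ii:
  fixes t k :: "nat \<Rightarrow> nat"
  assumes P: "P \<ge> 3" and t: "\<And>i. t i \<ge> 1" and k: "\<And>i. k i \<ge> 1"
    and unb: "\<not> bdd_above (range (\<lambda>i. (real (t i) - 1) / real (k i)))"
    and lim: "(\<lambda>i. exp (ln (Mc P (t i) (k i)) / real (t i + 2 * k i))) \<longlonglongrightarrow> y"
  shows "y \<le> real P"
proof -
  define g where "g R = ln (real P + 1) * inverse R + (cU P + 2) * sqrt (inverse R)" for R :: real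
  have gl: "(g \<longlongrightarrow> ln (real P + 1) * 0 + (cU P + 2) * sqrt 0) at_top"
    unfolding g_def by (intro tendsto_intros tendsto_inverse_0_at_top filterlim_ident)
  have c2: "cU P + 2 \<ge> 0" unfolding cU_def by simp
  have "y \<le> exp (ln (real P))"
  proof (rule ub_generic[OF lim])
    fix \<epsilon> :: real and m assume e: "\<epsilon> > 0"
    have "\<forall>\<^sub>F R in at_top. g R < \<epsilon>" using order_tendstoD(2)[OF gl] e by simp
    then obtain R0 where R0: "\<And>R. R \<ge> R0 \<Longrightarrow> g R < \<epsilon>" unfolding eventually_at_top_linorder by blast
    define R where "R = max R0 1"
    have R1: "R \<ge> 1" unfolding R_def by simp
    obtain i where i: "i \<ge> m" "(real (t i) - 1) / real (k i) > R" using unbounded_freq[OF unb] by blast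
    have k0: "real (k i) \<ge> 1" using k[of i] by simp
    have tR: "real (t i) - 1 > R * real (k i)" using i(2) k0 by (simp add: field_simps)
    have RK: "R \<le> real (t i + 2 * k i)" using tR R1 k0
      by (smt (verit) mult_le_cancel_left1 of_nat_add of_nat_0_le_iff)
    have Kpos: "real (t i + 2 * k i) > 0" using t[of i] by simp
    have q: "real (k i) / real (t i + 2 * k i) \<le> inverse R"
    proof -
      have "R * real (k i) \<le> real (t i + 2 * k i)" using tR by simp
      then show ?thesis using R1 Kpos by (simp add: field_simps)
    qed
    have "ln (Mc P (t i) (k i)) / real (t i + 2 * k i) \<le> ln (real P) + g R"
    proof -
      have a: "ln (real P + 1) / real (t i + 2 * k i) \<le> ln (real P + 1) * inverse R"
      proof -
        have "inverse (real (t i + 2 * k i)) \<le> inverse R" using RK R1 by (intro le_imp_inverse_le) auto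
        then show ?thesis unfolding divide_inverse by (intro mult_left_mono) auto
      qed
      have b: "(cU P + 2) * sqrt (real (k i) / real (t i + 2 * k i)) \<le> (cU P + 2) * sqrt (inverse R)"
        using q c2 by (intro mult_left_mono) auto
      show ?thesis using QU[OF P t[of i], of "k i"] a b unfolding g_def by simp
    qed
    moreover have "g R < \<epsilon>" using R0 unfolding R_def by simp
    ultimately have "exp (ln (Mc P (t i) (k i)) / real (t i + 2 * k i)) \<le> exp (ln (real P) + \<epsilon>)" by simp
    then show "\<exists>i\<ge>m. exp (ln (Mc P (t i) (k i)) / real (t i + 2 * k i)) \<le> exp (ln (real P) + \<epsilon>)"
      using i(1) by blast
  qed
  then show ?thesis using P by simp
qed

lemma card_M_Mc:
  assumes X: "finite X" "card X \<ge> 2" and t: "t \<ge> 1"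
  shows "real (card (M X t k)) = Mc (2 * card X - 1) t k"
proof -
  define P where "P = 2 * card X - 1"
  have X1: "card X \<ge> 1" using X by simp
  have P3: "P \<ge> 3" unfolding P_def using X by simp
  have cM: "card (M X t k) = card (RW X t) * ff P (2 * card X + t * (2 * card X - 2)) k"
    using card_M[OF X(1) X1] unfolding P_def .
  have cR: "card (RW X t) = (P + 1) * P ^ (t - 1)"
    using RW_count[OF X(1) X1, of t] t X unfolding P_def by simp
  have s: "2 * card X + t * (2 * card X - 2) = sz P t"
  proof -
    have e1: "P + 1 = 2 * card X" and e2: "P - 1 = 2 * card X - 2" using X unfolding P_def by linarith+
    show ?thesis unfolding sz_def e1 e2 by simp
  qed
  have fc: "Nz P t k * ff P (sz P t) k = sz P t * (Nz P t k choose k)"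
    using ff_closed[of P k "sz P t"] P3 unfolding Nz_def by simp
  have N0: "real (Nz P t k) > 0" using Nz_ge[OF P3, where t=t and k=k] by simp
  have fr: "real (ff P (sz P t) k) = real (sz P t) / real (Nz P t k) * real (Nz P t k choose k)"
  proof -
    have "real (Nz P t k) * real (ff P (sz P t) k) = real (sz P t) * real (Nz P t k choose k)"
      using arg_cong[OF fc, of real] by simp
    then show ?thesis using N0 by (simp add: field_simps)
  qed
  show ?thesis
    unfolding P_def[symmetric] cM cR s Mc_def using fr by (simp add: algebra_simps)
qed

theorem mainTheorem9:
  fixes X :: "'a set" and K t k :: "nat \<Rightarrow> nat" and y :: real
  assumes "finite X" and "card X \<ge> 2"
    and "\<And>i. t i \<ge> 1"
    and "\<And>i. K i = t i + 2 * k i"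
    and "filterlim K at_top sequentially"
    and "(\<lambda>i. real (card (M X (t i) (k i))) powr (1 / real (K i))) \<longlonglongrightarrow> y"
  shows "(bdd_above (range k) \<longrightarrow> y \<le> real (2 * card X - 1))
    \<and> ((\<forall>i. k i \<ge> 1) \<and> \<not> bdd_above (range (\<lambda>i. (real (t i) - 1) / real (k i)))
         \<longrightarrow> y \<le> real (2 * card X - 1))
    \<and> (\<forall>x::real. x \<ge> 0 \<longrightarrow> (\<forall>i. k i \<ge> 1) \<longrightarrow>
         (\<exists>r. strict_mono r \<and> ((\<lambda>n. (real (t (r n)) - 1) / real (k (r n))) \<longlonglongrightarrow> x))
         \<longrightarrow> y = exp (hfun (real (2 * card X - 1)) x))"
proof -
  define P where "P = 2 * card X - 1"
  have P3: "P \<ge> 3" unfolding P_def using assms(2) by simp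
  have aeq: "real (card (M X (t i) (k i))) powr (1 / real (K i)) = exp (ln (Mc P (t i) (k i)) / real (t i + 2 * k i))" for i
    unfolding card_M_Mc[OF assms(1,2) assms(3)[of i]] P_def[symmetric] assms(4)[of i]
    using exp_form[OF P3] by simp
  have lim: "(\<lambda>i. exp (ln (Mc P (t i) (k i)) / real (t i + 2 * k i))) \<longlonglongrightarrow> y"
    using assms(6) unfolding aeq .
  have Kinf: "filterlim (\<lambda>i. real (t i + 2 * k i)) at_top sequentially"
    using filterlim_compose[OF filterlim_real_sequentially assms(5)] unfolding assms(4) .
  have i: "bdd_above (range k) \<longrightarrow> y \<le> real P"
  proof
    assume "bdd_above (range k)"
    then obtain B where "\<And>i. k i \<le> B" unfolding bdd_above_def by blast
    then show "y \<le> real P" using part_i[OF P3 assms(3) _ Kinf lim] by blast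
  qed
  have ii: "(\<forall>i. k i \<ge> 1) \<and> \<not> bdd_above (range (\<lambda>i. (real (t i) - 1) / real (k i))) \<longrightarrow> y \<le> real P"
  proof (intro impI)
    assume h: "(\<forall>i. k i \<ge> 1) \<and> \<not> bdd_above (range (\<lambda>i. (real (t i) - 1) / real (k i)))"
    then have h1: "\<And>i. k i \<ge> 1" by simp
    show "y \<le> real P" using part_ii[OF P3 assms(3) h1 _ lim] h by blast
  qed
  have iii: "\<forall>x::real. x \<ge> 0 \<longrightarrow> (\<forall>i. k i \<ge> 1) \<longrightarrow>
         (\<exists>r. strict_mono r \<and> ((\<lambda>n. (real (t (r n)) - 1) / real (k (r n))) \<longlonglongrightarrow> x))
         \<longrightarrow> y = exp (hfun (real P) x)"
  proof (intro allI impI)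
    fix x :: real assume x: "x \<ge> 0" and k1: "\<forall>i. k i \<ge> 1"
      and "\<exists>r. strict_mono r \<and> ((\<lambda>n. (real (t (r n)) - 1) / real (k (r n))) \<longlonglongrightarrow> x)"
    then obtain r where r: "strict_mono r" "(\<lambda>n. (real (t (r n)) - 1) / real (k (r n))) \<longlonglongrightarrow> x" by blast
    have Kr: "filterlim (\<lambda>n. real (t (r n) + 2 * k (r n))) at_top sequentially"
      using filterlim_compose[OF Kinf filterlim_subseq[OF r(1)]] .
    have l3: "(\<lambda>n. ln (Mc P (t (r n)) (k (r n))) / real (t (r n) + 2 * k (r n))) \<longlonglongrightarrow> hfun (real P) x"
      using lim_iii[OF P3 assms(3) _ x Kr r(2)] k1 by blast
    have "(\<lambda>n. exp (ln (Mc P (t (r n)) (k (r n))) / real (t (r n) + 2 * k (r n)))) \<longlonglongrightarrow> exp (hfun (real P) x)"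
      by (intro tendsto_intros l3)
    moreover have "(\<lambda>n. exp (ln (Mc P (t (r n)) (k (r n))) / real (t (r n) + 2 * k (r n)))) \<longlonglongrightarrow> y"
      using LIMSEQ_subseq_LIMSEQ[OF lim r(1)] unfolding comp_def .
    ultimately show "y = exp (hfun (real P) x)" using LIMSEQ_unique by blast
  qed
  show ?thesis using i ii iii unfolding P_def by blast
qed

end
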